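(* Consider the SAMBA process with a constant learning rate $\alpha\in(0,1)$ satisfying $\alpha<\frac{\Delta}{r^\star-\Delta}$. Let $$\tau(2):=\min\Big\{t\ge1:p_{a^\star}(t)>\tfrac12\Big\},\qquad E(2):=\Big\{\mathbf p\in\mathcal P:\ \tfrac{1-\alpha}{2}\le p_{a^\star}<\tfrac12\Big\}.$$ Then $$\sup_{\mathbf p\in E(2)}\mathbb E\big[\tau(2)\,\big|\,\mathbf p(0)=\mathbf p\big]<\infty.$$
   Context: $\mathcal P$ is the set of probability vectors on $\mathcal A$. Bandit model: $\mathcal A$ finite set of arms, $N=|\mathcal A|$; $R_a(t)\in\{0,1\}$ independent Bernoulli with mean $r_a$ for $a\in\mathcal A$, $t\in\mathbb Z_+$; unique optimal arm $a^\star$ with $r^\star:=r_{a^\star}>r_a$ for $a\ne a^\star$; $\Delta:=r^\star-\max_{a\ne a^\star}r_a>0$. SAMBA process with constant learning rate $\alpha$, started from $\mathbf p(0)$: at time $t$, $a_\star(t)$ is an arm maximizing $p_a(t)$ (ties broken uniformly at random), $p_\star(t)=p_{a_\star(t)}(t)$; one arm is played, arm $a$ with conditional probability $p_a(t)$ given the past; $I_a(t)$ indicates that $a$ is played, $I_\star(t)=I_{a_\star(t)}(t)$, $R_\star(t)=R_{a_\star(t)}(t)$. For $a\ne a_\star(t)$: $p_a(t+1)=p_a(t)+\alpha p_a(t)^2\big[\frac{I_a(t)R_a(t)}{p_a(t)}-\frac{I_\star(t)R_\star(t)}{p_\star(t)}\big]$, and $p_{a_\star(t)}(t+1)=1-\sum_{a\ne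 a_\star(t)}p_a(t+1)$. *)

theory Defs
  imports "HOL-Probability.Probability"
begin

definition prob_vectors :: "('a::finite \<Rightarrow> real) set" where
  "prob_vectors = {p. (\<forall>a. 0 \<le> p a) \<and> (\<Sum>a\<in>UNIV. p a) = 1}"

definition gap :: "('a::finite \<Rightarrow> real) \<Rightarrow> 'a \<Rightarrow> real" where
  "gap r astar = r astar - Max (r ` (UNIV - {astar}))"

text \<open>Set of arms maximizing p (candidates for a_star(t)).\<close>
definition argmax_arms :: "('a::finite \<Rightarrow> real) \<Rightarrow> 'a set" where
  "argmax_arms p = {a. \<forall>b. p b \<le> p a}"

definition arm_pmf :: "('a::finite \<Rightarrow> real) \<Rightarrow> 'a pmf" where
  "arm_pmf p = embed_pmf p"

text \<open>Deterministic SAMBA update, given the leader s = a_star(t), the played arm a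
  and the reward R = R_a(t) of the played arm (the rewards of unplayed arms do not
  enter the update, since they are multiplied by I_a(t) = 0).\<close>
definition samba_update ::
  "real \<Rightarrow> ('a::finite \<Rightarrow> real) \<Rightarrow> 'a \<Rightarrow> 'a \<Rightarrow> bool \<Rightarrow> ('a \<Rightarrow> real)" where
  "samba_update \<alpha> p s a R =
     (let upd = (\<lambda>c. p c + \<alpha> * (p c)\<^sup>2 *
                  ((if c = a \<and> R then 1 / p c else 0) - (if s = a \<and> R then 1 / p s else 0)))
      in (\<lambda>b. if b = s then 1 - (\<Sum>c\<in>UNIV - {s}. upd c) else upd b))"

definition samba_step ::
  "real \<Rightarrow> ('a::finite \<Rightarrow> real) \<Rightarrow> ('a \<Rightarrow> real) \<Rightarrow> ('a \<Rightarrow> real) pmf" where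
  "samba_step \<alpha> r p =
     do { s \<leftarrow> pmf_of_set (argmax_arms p);
          a \<leftarrow> arm_pmf p;
          R \<leftarrow> bernoulli_pmf (r a);
          return_pmf (samba_update \<alpha> p s a R) }"

primrec samba_traj ::
  "real \<Rightarrow> ('a::finite \<Rightarrow> real) \<Rightarrow> nat \<Rightarrow> ('a \<Rightarrow> real) \<Rightarrow> ('a \<Rightarrow> real) list pmf" where
  "samba_traj \<alpha> r 0 p = return_pmf [p]"
| "samba_traj \<alpha> r (Suc n) p =
     bind_pmf (samba_step \<alpha> r p) (\<lambda>q. map_pmf (\<lambda>xs. p # xs) (samba_traj \<alpha> r n q))"

definition tau2_eq_prob ::
  "real \<Rightarrow> ('a::finite \<Rightarrow> real) \<Rightarrow> 'a \<Rightarrow> ('a \<Rightarrow> real) \<Rightarrow> nat \<Rightarrow> real" where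
  "tau2_eq_prob \<alpha> r astar p n =
     measure_pmf.prob (samba_traj \<alpha> r n p)
       {xs. 1 \<le> n \<and> (\<forall>t\<in>{1..<n}. (xs ! t) astar \<le> 1/2) \<and> (xs ! n) astar > 1/2}"

definition tau2_gt_prob ::
  "real \<Rightarrow> ('a::finite \<Rightarrow> real) \<Rightarrow> 'a \<Rightarrow> ('a \<Rightarrow> real) \<Rightarrow> nat \<Rightarrow> real" where
  "tau2_gt_prob \<alpha> r astar p n =
     measure_pmf.prob (samba_traj \<alpha> r n p) {xs. \<forall>t\<in>{1..n}. (xs ! t) astar \<le> 1/2}"

text \<open>E[tau(2) | p(0) = p] as an extended nonnegative real:
  sum_n n P(tau = n) + \<infinity> * P(tau = \<infinity>), with P(tau = \<infinity>) = inf_n P(tau > n).\<close>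
definition expected_tau2 ::
  "real \<Rightarrow> ('a::finite \<Rightarrow> real) \<Rightarrow> 'a \<Rightarrow> ('a \<Rightarrow> real) \<Rightarrow> ennreal" where
  "expected_tau2 \<alpha> r astar p =
     (\<Sum>n. ennreal (real n) * ennreal (tau2_eq_prob \<alpha> r astar p n))
     + \<top> * (INF n. ennreal (tau2_gt_prob \<alpha> r astar p n))"

end

theory Submission imports Defs begin

lemma pv_nonneg: "p \<in> prob_vectors \<Longrightarrow> 0 \<le> p a"
  by (simp add: prob_vectors_def)

lemma pv_sum: "p \<in> prob_vectors \<Longrightarrow> sum p UNIV = 1"
  by (simp add: prob_vectors_def)

lemma pmf_arm:
  fixes p :: "'a::finite \<Rightarrow> real"
  assumes "p \<in> prob_vectors" shows "pmf (arm_pmf p) a = p a"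
  unfolding arm_pmf_def
proof (rule pmf_embed_pmf)
  show "\<And>x. 0 \<le> p x" using assms by (simp add: prob_vectors_def)
  have "(\<integral>\<^sup>+ x. ennreal (p x) \<partial>count_space UNIV) = (\<Sum>x\<in>UNIV. ennreal (p x))"
    by (simp add: nn_integral_count_space_finite)
  also have "\<dots> = ennreal (\<Sum>x\<in>UNIV. p x)"
    using assms by (simp add: prob_vectors_def)
  also have "\<dots> = 1" using assms by (simp add: prob_vectors_def)
  finally show "(\<integral>\<^sup>+ x. ennreal (p x) \<partial>count_space UNIV) = 1" .
qed

lemma argmax_ne: "argmax_arms (p :: 'a::finite \<Rightarrow> real) \<noteq> {}"
proof -
  have "Max (range p) \<in> range p" by (rule Max_in) auto
  then obtain a where a0: "Max (range p) = p a" by (rule imageE)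
  then have a: "p a = Max (range p)" by simp
  have "\<forall>b. p b \<le> p a" unfolding a by (auto intro: Max_ge)
  then have "a \<in> argmax_arms p" by (auto simp: argmax_arms_def)
  then show ?thesis by auto
qed

lemma finite_set_step: "finite (set_pmf (samba_step \<alpha> r (p :: 'a::finite \<Rightarrow> real)))"
proof -
  have "set_pmf (samba_step \<alpha> r p) \<subseteq> (\<lambda>(s,a,R). samba_update \<alpha> p s a R) ` UNIV"
  proof
    fix q assume "q \<in> set_pmf (samba_step \<alpha> r p)"
    then obtain s a R where "q = samba_update \<alpha> p s a R" by (auto simp: samba_step_def)
    then show "q \<in> (\<lambda>(s,a,R). samba_update \<alpha> p s a R) ` UNIV"
      by (intro rev_image_eqI[of "(s,a,R)"]) auto
  qed
  then show ?thesis by (rule finite_subset) simp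
qed

lemma integrable_step[simp]: "integrable (measure_pmf (samba_step \<alpha> r (p :: 'a::finite \<Rightarrow> real))) (f :: _ \<Rightarrow> real)"
  by (rule integrable_measure_pmf_finite[OF finite_set_step])

lemma step_expect:
  fixes p :: "'a::finite \<Rightarrow> real" and f :: "('a \<Rightarrow> real) \<Rightarrow> real"
  assumes pv: "p \<in> prob_vectors" and rr: "\<And>a. 0 \<le> r a \<and> r a \<le> 1"
  shows "measure_pmf.expectation (samba_step \<alpha> r p) f =
    (\<Sum>s\<in>argmax_arms p. (\<Sum>a\<in>UNIV. p a * (f (samba_update \<alpha> p s a True) * r a
        + f (samba_update \<alpha> p s a False) * (1 - r a))) / card (argmax_arms p))"
proof -
  have fin: "finite (argmax_arms p)" by simp
  show ?thesis
    unfolding samba_step_def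
    apply (subst pmf_expectation_bind_pmf_of_set[OF argmax_ne fin])
     apply (simp add: set_bind_pmf)
    apply (rule sum.cong[OF refl])
    apply (subst pmf_expectation_bind[of UNIV])
       apply simp_all
    using rr by (simp add: pmf_arm[OF pv] map_pmf_def[symmetric] sum_divide_distrib[symmetric] field_simps)
qed


lemma prob_cong_supp:
  assumes "\<And>x. x \<in> set_pmf M \<Longrightarrow> x \<in> A \<longleftrightarrow> x \<in> B"
  shows "measure_pmf.prob M A = measure_pmf.prob M B"
proof -
  have "A \<inter> set_pmf M = B \<inter> set_pmf M" using assms by auto
  then show ?thesis by (metis measure_Int_set_pmf)
qed

lemma traj_supp: "ys \<in> set_pmf (samba_traj \<alpha> r n q) \<Longrightarrow> ys ! 0 = q"
  by (induction n arbitrary: q ys) (auto simp: set_bind_pmf)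

lemma traj_finite: "finite (set_pmf (samba_traj \<alpha> r n (q :: 'a::finite \<Rightarrow> real)))"
proof (induction n arbitrary: q)
  case 0
  then show ?case by simp
next
  case (Suc n)
  show ?case using Suc finite_set_step[of \<alpha> r q] by (simp add: set_bind_pmf)
qed

lemma traj_prob_Suc:
  fixes p :: "'a::finite \<Rightarrow> real"
  shows "measure_pmf.prob (samba_traj \<alpha> r (Suc n) p) A =
    measure_pmf.expectation (samba_step \<alpha> r p) (\<lambda>q. measure_pmf.prob (samba_traj \<alpha> r n q) ((#) p -` A))"
proof -
  let ?S = "set_pmf (samba_step \<alpha> r p)"
  have "measure_pmf.prob (samba_traj \<alpha> r (Suc n) p) A =
     measure_pmf.expectation (samba_traj \<alpha> r (Suc n) p) (indicator A)" by simp
  also have "\<dots> = (\<Sum>q\<in>?S. pmf (samba_step \<alpha> r p) q *\<^sub>R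
      measure_pmf.expectation (map_pmf ((#) p) (samba_traj \<alpha> r n q)) (indicator A))"
    by (simp only: samba_traj.simps, rule pmf_expectation_bind)
       (auto simp: finite_set_step traj_finite)
  also have "\<dots> = (\<Sum>q\<in>?S. measure_pmf.prob (samba_traj \<alpha> r n q) ((#) p -` A) * pmf (samba_step \<alpha> r p) q)"
    by (intro sum.cong refl) (simp add: indicator_vimage[symmetric] del: indicator_vimage)
  also have "\<dots> = measure_pmf.expectation (samba_step \<alpha> r p) (\<lambda>q. measure_pmf.prob (samba_traj \<alpha> r n q) ((#) p -` A))"
    by (rule integral_measure_pmf_real[symmetric]) (auto simp: finite_set_step)
  finally show ?thesis .
qed


lemma gt_0: "tau2_gt_prob \<alpha> r astar p 0 = 1"
  by (simp add: tau2_gt_prob_def)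

lemma eq_0: "tau2_eq_prob \<alpha> r astar p 0 = 0"
  by (simp add: tau2_eq_prob_def)

lemma all_shift:
  "(\<forall>t\<in>{1..Suc k}. P ((p # ys) ! t)) \<longleftrightarrow> (\<forall>t\<in>{0..k}. P (ys ! t))"
proof
  assume H: "\<forall>t\<in>{1..Suc k}. P ((p # ys) ! t)"
  show "\<forall>t\<in>{0..k}. P (ys ! t)"
  proof
    fix t assume "t \<in> {0..k}"
    then have "Suc t \<in> {1..Suc k}" by simp
    then show "P (ys ! t)" using H by fastforce
  qed
next
  assume H: "\<forall>t\<in>{0..k}. P (ys ! t)"
  show "\<forall>t\<in>{1..Suc k}. P ((p # ys) ! t)"
  proof
    fix t assume "t \<in> {1..Suc k}"
    then obtain t' where "t = Suc t'" "t' \<in> {0..k}" by (cases t) auto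
    then show "P ((p # ys) ! t)" using H by simp
  qed
qed

lemma all_split0:
  "(\<forall>t\<in>{0..k}. P (ys ! t)) \<longleftrightarrow> P (ys ! 0) \<and> (\<forall>t\<in>{1..k}. P (ys ! t))"
proof -
  have "{0..k} = insert 0 {1..k}" by auto
  then show ?thesis by simp
qed

lemma gt_Suc:
  fixes p :: "'a::finite \<Rightarrow> real"
  shows "tau2_gt_prob \<alpha> r astar p (Suc k) =
    measure_pmf.expectation (samba_step \<alpha> r p)
      (\<lambda>q. if q astar \<le> 1/2 then tau2_gt_prob \<alpha> r astar q k else 0)"
  unfolding tau2_gt_prob_def
  apply (subst traj_prob_Suc)
  apply (rule Bochner_Integration.integral_cong[OF refl])
  subgoal for q
  proof -
    have "measure_pmf.prob (samba_traj \<alpha> r k q)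
         ((#) p -` {xs. \<forall>t\<in>{1..Suc k}. (xs ! t) astar \<le> 1 / 2}) =
        measure_pmf.prob (samba_traj \<alpha> r k q)
         (if q astar \<le> 1/2 then {xs. \<forall>t\<in>{1..k}. (xs ! t) astar \<le> 1 / 2} else {})"
    proof (rule prob_cong_supp)
      fix ys assume "ys \<in> set_pmf (samba_traj \<alpha> r k q)"
      then have y0: "ys ! 0 = q" by (rule traj_supp)
      have "ys \<in> (#) p -` {xs. \<forall>t\<in>{1..Suc k}. (xs ! t) astar \<le> 1 / 2}
         \<longleftrightarrow> (\<forall>t\<in>{0..k}. (ys ! t) astar \<le> 1 / 2)"
        using all_shift[where P="\<lambda>x. x astar \<le> 1/2" and p=p and ys=ys and k=k] by simp
      also have "\<dots> \<longleftrightarrow> q astar \<le> 1/2 \<and> (\<forall>t\<in>{1..k}. (ys ! t) astar \<le> 1 / 2)"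
        using all_split0[where P="\<lambda>x. x astar \<le> 1/2" and ys=ys and k=k] y0 by simp
      finally show "ys \<in> (#) p -` {xs. \<forall>t\<in>{1..Suc k}. (xs ! t) astar \<le> 1 / 2} \<longleftrightarrow>
         ys \<in> (if q astar \<le> 1/2 then {xs. \<forall>t\<in>{1..k}. (xs ! t) astar \<le> 1 / 2} else {})"
        by simp
    qed
    then show ?thesis by simp
  qed
  done


lemma all_shift2:
  "(\<forall>t\<in>{1..<Suc k}. P ((p # ys) ! t)) \<longleftrightarrow> (\<forall>t\<in>{0..<k}. P (ys ! t))"
proof
  assume H: "\<forall>t\<in>{1..<Suc k}. P ((p # ys) ! t)"
  show "\<forall>t\<in>{0..<k}. P (ys ! t)"
  proof
    fix t assume "t \<in> {0..<k}"
    then have "Suc t \<in> {1..<Suc k}" by simp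
    then show "P (ys ! t)" using H by fastforce
  qed
next
  assume H: "\<forall>t\<in>{0..<k}. P (ys ! t)"
  show "\<forall>t\<in>{1..<Suc k}. P ((p # ys) ! t)"
  proof
    fix t assume "t \<in> {1..<Suc k}"
    then obtain t' where "t = Suc t'" "t' \<in> {0..<k}" by (cases t) auto
    then show "P ((p # ys) ! t)" using H by simp
  qed
qed

lemma all_split1:
  "(\<forall>t\<in>{0..<Suc k}. P (ys ! t)) \<longleftrightarrow> P (ys ! 0) \<and> (\<forall>t\<in>{1..<Suc k}. P (ys ! t))"
proof -
  have "{0..<Suc k} = insert 0 {1..<Suc k}" by auto
  then show ?thesis by simp
qed

lemma eq_Suc:
  fixes p :: "'a::finite \<Rightarrow> real"
  shows "tau2_eq_prob \<alpha> r astar p (Suc k) =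
    measure_pmf.expectation (samba_step \<alpha> r p)
      (\<lambda>q. if q astar \<le> 1/2 then tau2_eq_prob \<alpha> r astar q k else (if k = 0 then 1 else 0))"
  unfolding tau2_eq_prob_def
  apply (subst traj_prob_Suc)
  apply (rule Bochner_Integration.integral_cong[OF refl])
  subgoal for q
  proof -
    let ?A = "\<lambda>n. {xs. 1 \<le> n \<and> (\<forall>t\<in>{1..<n}. (xs ! t) astar \<le> 1/2) \<and> (xs ! n) astar > 1/2}"
    have "measure_pmf.prob (samba_traj \<alpha> r k q) ((#) p -` ?A (Suc k)) =
        measure_pmf.prob (samba_traj \<alpha> r k q)
         (if q astar \<le> 1/2 then ?A k else (if k = 0 then UNIV else {}))"
    proof (rule prob_cong_supp)
      fix ys assume "ys \<in> set_pmf (samba_traj \<alpha> r k q)"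
      then have y0: "ys ! 0 = q" by (rule traj_supp)
      have "ys \<in> (#) p -` ?A (Suc k)
         \<longleftrightarrow> (\<forall>t\<in>{0..<k}. (ys ! t) astar \<le> 1 / 2) \<and> (ys ! k) astar > 1/2"
        using all_shift2[where P="\<lambda>x. x astar \<le> 1/2" and p=p and ys=ys and k=k] by simp
      also have "\<dots> \<longleftrightarrow> ys \<in> (if q astar \<le> 1/2 then ?A k else (if k = 0 then UNIV else {}))"
      proof (cases k)
        case 0
        then show ?thesis using y0 by auto
      next
        case (Suc k')
        then show ?thesis
          using all_split1[where P="\<lambda>x. x astar \<le> 1/2" and ys=ys and k=k'] y0 by auto
      qed
      finally show "ys \<in> (#) p -` ?A (Suc k) \<longleftrightarrow>
         ys \<in> (if q astar \<le> 1/2 then ?A k else (if k = 0 then UNIV else {}))" .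
    qed
    then show ?thesis by (simp add: measure_pmf.prob_space)
  qed
  done


lemma sum_ind0: "(\<Sum>k\<le>n. (if k = (0::nat) then c else 0)) = (c::real)"
  by (induction n) auto

lemma part_one:
  fixes q :: "'a::finite \<Rightarrow> real"
  shows "(\<Sum>k\<le>n. tau2_eq_prob \<alpha> r astar q k) + tau2_gt_prob \<alpha> r astar q n = 1"
proof (induction n arbitrary: q)
  case 0
  then show ?case by (simp add: eq_0 gt_0)
next
  case (Suc n)
  let ?E = "measure_pmf.expectation (samba_step \<alpha> r q)"
  let ?F = "\<lambda>k q'. if q' astar \<le> 1/2 then tau2_eq_prob \<alpha> r astar q' k else (if k = 0 then 1 else 0)"
  let ?G = "\<lambda>q'. if q' astar \<le> 1/2 then tau2_gt_prob \<alpha> r astar q' n else 0"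
  have "(\<Sum>k\<le>Suc n. tau2_eq_prob \<alpha> r astar q k) + tau2_gt_prob \<alpha> r astar q (Suc n)
      = (\<Sum>k\<le>n. ?E (?F k)) + ?E ?G"
    by (simp only: sum.atMost_Suc_shift eq_0 eq_Suc gt_Suc)
  also have "\<dots> = ?E (\<lambda>q'. (\<Sum>k\<le>n. ?F k q') + ?G q')"
    by (simp add: integral_sum integral_add)
  also have "\<dots> = ?E (\<lambda>q'. 1)"
  proof (rule Bochner_Integration.integral_cong[OF refl])
    fix q' :: "'a \<Rightarrow> real"
    show "(\<Sum>k\<le>n. ?F k q') + ?G q' = 1"
      using Suc.IH[of q'] sum_ind0[of n 1] by (cases "q' astar \<le> 1/2") auto
  qed
  also have "\<dots> = 1" by simp
  finally show ?case .
qed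

definition Tt :: "real \<Rightarrow> ('a::finite \<Rightarrow> real) \<Rightarrow> 'a \<Rightarrow> ('a \<Rightarrow> real) \<Rightarrow> nat \<Rightarrow> real" where
  "Tt \<alpha> r astar q n = (\<Sum>k\<le>n. real k * tau2_eq_prob \<alpha> r astar q k) + real n * tau2_gt_prob \<alpha> r astar q n"

lemma T_rec:
  fixes p :: "'a::finite \<Rightarrow> real"
  shows "Tt \<alpha> r astar p (Suc n) = 1 + measure_pmf.expectation (samba_step \<alpha> r p)
      (\<lambda>q. if q astar \<le> 1/2 then Tt \<alpha> r astar q n else 0)"
proof -
  let ?E = "measure_pmf.expectation (samba_step \<alpha> r p)"
  let ?F = "\<lambda>k q'. if q' astar \<le> 1/2 then tau2_eq_prob \<alpha> r astar q' k else (if k = 0 then 1 else 0)"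
  let ?G = "\<lambda>q'. if q' astar \<le> 1/2 then tau2_gt_prob \<alpha> r astar q' n else 0"
  have "Tt \<alpha> r astar p (Suc n) = (\<Sum>k\<le>n. real (Suc k) * ?E (?F k)) + real (Suc n) * ?E ?G"
    unfolding Tt_def by (simp only: sum.atMost_Suc_shift eq_0 eq_Suc gt_Suc)
  also have "\<dots> = ?E (\<lambda>q'. (\<Sum>k\<le>n. real (Suc k) * ?F k q') + real (Suc n) * ?G q')"
    by (simp add: integral_sum integral_add)
  also have "\<dots> = ?E (\<lambda>q. 1 + (if q astar \<le> 1/2 then Tt \<alpha> r astar q n else 0))"
  proof (rule Bochner_Integration.integral_cong[OF refl])
    fix q' :: "'a \<Rightarrow> real"
    show "(\<Sum>k\<le>n. real (Suc k) * ?F k q') + real (Suc n) * ?G q' =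
       1 + (if q' astar \<le> 1/2 then Tt \<alpha> r astar q' n else 0)"
    proof (cases "q' astar \<le> 1/2")
      case True
      have "(\<Sum>k\<le>n. real (Suc k) * tau2_eq_prob \<alpha> r astar q' k) + real (Suc n) * tau2_gt_prob \<alpha> r astar q' n
          = Tt \<alpha> r astar q' n + ((\<Sum>k\<le>n. tau2_eq_prob \<alpha> r astar q' k) + tau2_gt_prob \<alpha> r astar q' n)"
        unfolding Tt_def by (simp add: sum.distrib algebra_simps)
      then show ?thesis using True part_one[where n=n and q=q' and \<alpha>=\<alpha> and r=r and astar=astar] by simp
    next
      case False
      have "(\<Sum>k\<le>n. real (Suc k) * (if k = 0 then 1 else 0)) = (\<Sum>k\<le>n. (if k = 0 then 1 else 0::real))"
        by (intro sum.cong) auto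
      then show ?thesis using False sum_ind0[of n 1] by simp
    qed
  qed
  also have "\<dots> = 1 + ?E (\<lambda>q. if q astar \<le> 1/2 then Tt \<alpha> r astar q n else 0)"
    by (simp add: integral_add)
  finally show ?thesis .
qed

lemma caseA_arith:
  fixes x y u rs rst \<alpha> K L \<rho> \<eta> \<Delta> N :: real
  assumes a0: "0 < \<alpha>" and a1: "\<alpha> < 1" and x0: "0 < x" and xy: "x \<le> y"
    and yN: "1 / N \<le> y" and N0: "0 < N"
    and rs0: "0 \<le> rs" and rsr: "rs \<le> \<rho>" and r1: "rst \<le> 1" and rsD: "\<Delta> \<le> rst - rs"
    and eta: "rst / (1 + \<alpha>) = \<rho> + \<eta>" and eta0: "0 < \<eta>" and D0: "0 < \<Delta>"
    and rho1: "\<rho> \<le> 1"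
    and K: "K = 2 / (\<alpha> * \<eta>)"
    and L: "(K * \<alpha> / (1 - \<alpha>) + 1) / (\<alpha> * \<Delta> * (\<eta> / (4 * N))\<^sup>2) \<le> L"
  shows "x * rst * ((K / (x * (1 + \<alpha>)) + L * (1 - x * (1 + \<alpha>))) - (K / x + L * (1 - x)))
       + y * rs * ((K / (x - \<alpha> * x\<^sup>2 / y) + L * (1 - (x - \<alpha> * x\<^sup>2 / y))) - (K / x + L * (1 - x)))
       \<le> -1"
proof -
  define u where "u = x / y"
  have y0: "0 < y" using x0 xy by linarith
  have u0: "0 < u" and u1: "u \<le> 1" using x0 xy y0 by (auto simp: u_def)
  have auA: "\<alpha> * u \<le> \<alpha>" using mult_left_mono[of u 1 \<alpha>] u1 a0 by simp
  have au: "0 < 1 - \<alpha> * u" using auA a1 by linarith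
  have K0: "0 < K" using K a0 eta0 by simp
  have rst0: "rs < rst" using rsD D0 by linarith
  have xx: "x - \<alpha> * x\<^sup>2 / y = x * (1 - \<alpha> * u)"
    using y0 by (simp add: u_def power2_eq_square field_simps)
  have T1: "x * rst * ((K / (x * (1 + \<alpha>)) + L * (1 - x * (1 + \<alpha>))) - (K / x + L * (1 - x)))
     = - K * \<alpha> * rst / (1 + \<alpha>) - L * \<alpha> * rst * x\<^sup>2"
  proof -
    have "x + \<alpha> * x \<noteq> 0" "1 + \<alpha> \<noteq> 0" "x \<noteq> 0" using x0 a0
      by (smt (verit) mult_pos_pos)+
    have xa: "x * (1 + \<alpha>) \<noteq> 0" using x0 a0 by simp
    have gen: "\<And>b. 0 < b \<Longrightarrow> x * (K / (x * b) - K / x) = K * (1 - b) / b"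
      using x0 by (simp add: field_simps)
    have e1: "x * (K / (x * (1 + \<alpha>)) - K / x) = - K * \<alpha> / (1 + \<alpha>)"
      using gen[of "1 + \<alpha>"] a0 by simp
    have "x * rst * ((K / (x * (1 + \<alpha>)) + L * (1 - x * (1 + \<alpha>))) - (K / x + L * (1 - x)))
       = rst * (x * (K / (x * (1 + \<alpha>)) - K / x)) - L * \<alpha> * rst * x\<^sup>2"
      by (simp add: algebra_simps power2_eq_square)
    then show ?thesis unfolding e1 by simp
  qed
  have T2: "y * rs * ((K / (x - \<alpha> * x\<^sup>2 / y) + L * (1 - (x - \<alpha> * x\<^sup>2 / y))) - (K / x + L * (1 - x)))
     = K * \<alpha> * rs / (1 - \<alpha> * u) + L * \<alpha> * rs * x\<^sup>2"
    unfolding xx using x0 y0 au by (simp add: u_def field_simps power2_eq_square)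
  have sum: "?thesis \<longleftrightarrow> K * \<alpha> * (rs / (1 - \<alpha> * u) - rst / (1 + \<alpha>)) - L * \<alpha> * x\<^sup>2 * (rst - rs) \<le> -1"
    unfolding T1 T2 by (simp add: field_simps)
  have Lnn: "0 \<le> L"
    by (rule order_trans[OF _ L]) (use a0 a1 K0 D0 N0 eta0 in simp)
  have Lterm: "0 \<le> L * \<alpha> * x\<^sup>2 * (rst - rs)" using Lnn a0 rst0 by simp
  show ?thesis
  proof (cases "x \<le> \<eta> / (4 * N)")
    case True
    have "u \<le> x * N"
    proof -
      have "1 \<le> y * N" using yN N0 by (simp add: field_simps)
      then have "x \<le> x * (y * N)" using x0 by simp
      then show ?thesis unfolding u_def using y0 by (simp add: field_simps)
    qed
    also have "x * N \<le> \<eta> / 4" using True N0 by (simp add: field_simps)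
    finally have uu: "u \<le> \<eta> / 4" .
    have eta1: "\<eta> \<le> 1"
    proof -
      have "rst / (1 + \<alpha>) \<le> rst" using a0 rst0 rs0 by (simp add: field_simps)
      then show ?thesis using eta r1 rs0 rsr by linarith
    qed
    have "\<alpha> * u \<le> 1 * u" using mult_right_mono[of \<alpha> 1 u] a1 u0 by simp
    then have au2: "\<alpha> * u \<le> \<eta> / 4" using uu by linarith
    have au3: "3/4 \<le> 1 - \<alpha> * u" using au2 eta1 by linarith
    have "rs / (1 - \<alpha> * u) \<le> \<rho> / (1 - \<alpha> * u)"
      using rsr au by (simp add: divide_right_mono)
    also have "\<rho> / (1 - \<alpha> * u) = \<rho> + \<rho> * (\<alpha> * u) / (1 - \<alpha> * u)"
      using au by (simp add: field_simps)
    also have "\<rho> * (\<alpha> * u) / (1 - \<alpha> * u) \<le> (\<eta> / 4) / (3 / 4)"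
    proof (rule frac_le)
      show "0 \<le> \<eta> / 4" using eta0 by simp
      have "0 \<le> \<rho>" using rs0 rsr by linarith
      moreover have "0 \<le> \<alpha> * u" using a0 u0 by simp
      ultimately have "\<rho> * (\<alpha> * u) \<le> 1 * (\<alpha> * u)" using rho1 by (intro mult_right_mono) auto
      then show "\<rho> * (\<alpha> * u) \<le> \<eta> / 4" using au2 by linarith
      show "0 < 3 / (4::real)" by simp
      show "3 / 4 \<le> 1 - \<alpha> * u" by (rule au3)
    qed
    finally have "rs / (1 - \<alpha> * u) \<le> \<rho> + \<eta> / 4 / (3 / 4)" by simp
    moreover have "\<eta> / 4 / (3 / 4) = \<eta> / 3" by simp
    ultimately have c3: "rs / (1 - \<alpha> * u) \<le> \<rho> + \<eta> / 3" by simp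
    have "rs / (1 - \<alpha> * u) - rst / (1 + \<alpha>) \<le> - (2/3) * \<eta>"
      unfolding eta using c3 by simp
    then have "K * \<alpha> * (rs / (1 - \<alpha> * u) - rst / (1 + \<alpha>)) \<le> K * \<alpha> * (- (2/3) * \<eta>)"
      using K0 a0 by (intro mult_left_mono) auto
    also have "K * \<alpha> * (- (2/3) * \<eta>) = - 4 / 3" using K a0 eta0 by (simp add: field_simps)
    finally show ?thesis unfolding sum using Lterm by linarith
  next
    case False
    have "rs / (1 - \<alpha> * u) \<le> 1 / (1 - \<alpha>)"
    proof (rule frac_le)
      show "0 \<le> (1::real)" by simp
      show "rs \<le> 1" using rst0 r1 by linarith
      show "0 < 1 - \<alpha>" using a1 by simp
      show "1 - \<alpha> \<le> 1 - \<alpha> * u" using auA by linarith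
    qed
    moreover have "0 \<le> rst / (1 + \<alpha>)" using rst0 rs0 a0 by simp
    ultimately have "K * \<alpha> * (rs / (1 - \<alpha> * u) - rst / (1 + \<alpha>)) \<le> K * \<alpha> * (1 / (1 - \<alpha>))"
      using K0 a0 by (intro mult_left_mono) auto
    also have "\<dots> = K * \<alpha> / (1 - \<alpha>)" by simp
    finally have A1: "K * \<alpha> * (rs / (1 - \<alpha> * u) - rst / (1 + \<alpha>)) \<le> K * \<alpha> / (1 - \<alpha>)" .
    define x0 where "x0 = \<eta> / (4 * N)"
    have x0p: "0 < x0" using eta0 N0 by (simp add: x0_def)
    have xg: "x0 \<le> x" using False by (simp add: x0_def)
    have "(K * \<alpha> / (1 - \<alpha>) + 1) = ((K * \<alpha> / (1 - \<alpha>) + 1) / (\<alpha> * \<Delta> * x0\<^sup>2)) * (\<alpha> * \<Delta> * x0\<^sup>2)"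
      using a0 D0 x0p by (simp add: field_simps)
    also have "\<dots> \<le> L * (\<alpha> * \<Delta> * x0\<^sup>2)"
      using L a0 D0 x0p by (intro mult_right_mono) (auto simp: x0_def)
    also have "\<dots> \<le> L * (\<alpha> * (rst - rs) * x\<^sup>2)"
    proof (intro mult_left_mono Lnn)
      have "x0\<^sup>2 \<le> x\<^sup>2" using xg x0p by (simp add: power_mono)
      then show "\<alpha> * \<Delta> * x0\<^sup>2 \<le> \<alpha> * (rst - rs) * x\<^sup>2"
        using a0 rsD D0 by (intro mult_mono) (auto intro: mult_left_mono)
    qed
    finally have "K * \<alpha> / (1 - \<alpha>) + 1 \<le> L * \<alpha> * x\<^sup>2 * (rst - rs)" by (simp add: ac_simps)
    then show ?thesis unfolding sum using A1 by linarith
  qed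
qed


lemma caseB_term:
  fixes x pa ra \<alpha> K L N :: real
  assumes a0: "0 < \<alpha>" and a1: "\<alpha> < 1" and x0: "0 < x" and pa0: "0 \<le> pa" and pax: "pa \<le> x"
    and xN: "1 / N \<le> x" and N0: "0 < N" and ra0: "0 \<le> ra" and K0: "0 \<le> K" and L0: "0 \<le> L"
  shows "pa * ra * ((K / (x - \<alpha> * pa) + L * (1 - (x - \<alpha> * pa))) - (K / x + L * (1 - x)))
       \<le> ra * pa\<^sup>2 * (K * \<alpha> * N\<^sup>2 / (1 - \<alpha>) + L * \<alpha>)"
proof -
  have apx: "\<alpha> * pa \<le> \<alpha> * x" using pax a0 by simp
  have "(1 - \<alpha>) * x \<le> x - \<alpha> * pa" using apx by (simp add: algebra_simps)
  moreover have p1: "0 < (1 - \<alpha>) * x" using a1 x0 by simp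
  ultimately have d0: "0 < x - \<alpha> * pa" by linarith
  have eq: "(K / (x - \<alpha> * pa) + L * (1 - (x - \<alpha> * pa))) - (K / x + L * (1 - x))
     = K * \<alpha> * pa * (1 / (x * (x - \<alpha> * pa))) + L * \<alpha> * pa"
    using d0 x0 by (simp add: field_simps)
  have "x * x \<ge> (1 / N) * (1 / N)" using xN N0 x0 by (intro mult_mono) auto
  then have xx: "1 / (x * x) \<le> N\<^sup>2"
    using x0 N0 by (simp add: field_simps power2_eq_square)
  have "x * ((1 - \<alpha>) * x) \<le> x * (x - \<alpha> * pa)"
    using \<open>(1 - \<alpha>) * x \<le> x - \<alpha> * pa\<close> x0 by simp
  then have "1 / (x * (x - \<alpha> * pa)) \<le> 1 / (x * ((1 - \<alpha>) * x))"
    using p1 x0 by (intro divide_left_mono) auto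
  also have "\<dots> = (1 / (x * x)) / (1 - \<alpha>)" using a1 by (simp add: field_simps)
  also have "\<dots> \<le> N\<^sup>2 / (1 - \<alpha>)" using xx a1 by (intro divide_right_mono) auto
  finally have b1: "1 / (x * (x - \<alpha> * pa)) \<le> N\<^sup>2 / (1 - \<alpha>)" .
  have "K * \<alpha> * pa * (1 / (x * (x - \<alpha> * pa))) + L * \<alpha> * pa \<le> K * \<alpha> * pa * (N\<^sup>2 / (1 - \<alpha>)) + L * \<alpha> * pa"
    using b1 K0 a0 pa0 by (intro add_right_mono mult_left_mono) auto
  then have "pa * ra * (K * \<alpha> * pa * (1 / (x * (x - \<alpha> * pa))) + L * \<alpha> * pa)
     \<le> pa * ra * (K * \<alpha> * pa * (N\<^sup>2 / (1 - \<alpha>)) + L * \<alpha> * pa)"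
    using pa0 ra0 by (intro mult_left_mono) auto
  also have "\<dots> = ra * pa\<^sup>2 * (K * \<alpha> * N\<^sup>2 / (1 - \<alpha>) + L * \<alpha>)"
    by (simp add: algebra_simps power2_eq_square)
  finally show ?thesis unfolding eq .
qed

lemma caseB_top:
  fixes x Q rst \<alpha> K L :: real
  assumes a0: "0 < \<alpha>" and x0: "0 < x" and Q0: "0 \<le> Q" and K0: "0 \<le> K" and r0: "0 \<le> rst"
  shows "x * rst * ((K / (x + \<alpha> * Q / x) + L * (1 - (x + \<alpha> * Q / x))) - (K / x + L * (1 - x)))
       \<le> - L * \<alpha> * rst * Q"
proof -
  have "0 \<le> \<alpha> * Q / x" using a0 Q0 x0 by simp
  then have "K / (x + \<alpha> * Q / x) \<le> K / x" using K0 x0 by (intro divide_left_mono) auto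
  then have "(K / (x + \<alpha> * Q / x) + L * (1 - (x + \<alpha> * Q / x))) - (K / x + L * (1 - x)) \<le> - L * \<alpha> * Q / x"
    by (simp add: algebra_simps)
  then have "x * rst * ((K / (x + \<alpha> * Q / x) + L * (1 - (x + \<alpha> * Q / x))) - (K / x + L * (1 - x)))
      \<le> x * rst * (- L * \<alpha> * Q / x)"
    using x0 r0 by (intro mult_left_mono) auto
  also have "\<dots> = - L * \<alpha> * rst * Q" using x0 by simp
  finally show ?thesis .
qed

lemma caseB_final:
  fixes S Q rst \<rho> \<Delta> \<alpha> K L N :: real
  assumes a0: "0 < \<alpha>" and a1: "\<alpha> < 1" and S: "S \<le> \<rho> * Q" and Q: "1 / (4 * N\<^sup>2) \<le> Q"
    and N0: "0 < N" and rho: "\<rho> = rst - \<Delta>" and rho0: "0 \<le> \<rho>" and rho1: "\<rho> \<le> 1" and D0: "0 < \<Delta>"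
    and K0: "0 \<le> K" and L: "(K * N\<^sup>2 / (1 - \<alpha>) + 4 * N\<^sup>2 / \<alpha>) / \<Delta> \<le> L"
  shows "- L * \<alpha> * rst * Q + S * (K * \<alpha> * N\<^sup>2 / (1 - \<alpha>) + L * \<alpha>) \<le> -1"
proof -
  have c0: "0 \<le> K * \<alpha> * N\<^sup>2 / (1 - \<alpha>) + L * \<alpha>"
  proof -
    have "0 \<le> (K * N\<^sup>2 / (1 - \<alpha>) + 4 * N\<^sup>2 / \<alpha>) / \<Delta>" using K0 a0 a1 D0 by simp
    then have "0 \<le> L" using L by linarith
    then show ?thesis using K0 a0 a1 by simp
  qed
  have "S * (K * \<alpha> * N\<^sup>2 / (1 - \<alpha>) + L * \<alpha>) \<le> (\<rho> * Q) * (K * \<alpha> * N\<^sup>2 / (1 - \<alpha>) + L * \<alpha>)"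
    using S c0 by (rule mult_right_mono)
  also have "\<dots> \<le> Q * (K * \<alpha> * N\<^sup>2 / (1 - \<alpha>)) + \<rho> * Q * L * \<alpha>"
  proof -
    have Q0: "0 \<le> Q" using Q N0 by (smt (verit) divide_nonneg_nonneg zero_le_power2)
    have "\<rho> * Q * (K * \<alpha> * N\<^sup>2 / (1 - \<alpha>)) \<le> 1 * Q * (K * \<alpha> * N\<^sup>2 / (1 - \<alpha>))"
      using rho1 Q0 K0 a0 a1 by (intro mult_right_mono) auto
    then show ?thesis by (simp add: algebra_simps)
  qed
  finally have A: "- L * \<alpha> * rst * Q + S * (K * \<alpha> * N\<^sup>2 / (1 - \<alpha>) + L * \<alpha>)
      \<le> \<alpha> * Q * (K * N\<^sup>2 / (1 - \<alpha>) - L * \<Delta>)"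
    unfolding rho by (simp add: algebra_simps)
  have "K * N\<^sup>2 / (1 - \<alpha>) + 4 * N\<^sup>2 / \<alpha> \<le> L * \<Delta>" using L D0 by (simp add: field_simps)
  then have B: "K * N\<^sup>2 / (1 - \<alpha>) - L * \<Delta> \<le> - (4 * N\<^sup>2 / \<alpha>)" by linarith
  have "\<alpha> * Q * (K * N\<^sup>2 / (1 - \<alpha>) - L * \<Delta>) \<le> \<alpha> * Q * (- (4 * N\<^sup>2 / \<alpha>))"
  proof (rule mult_left_mono[OF B])
    show "0 \<le> \<alpha> * Q" using a0 Q N0 by (smt (verit) divide_nonneg_nonneg zero_le_power2 mult_nonneg_nonneg)
  qed
  also have "\<dots> = - (4 * N\<^sup>2 * Q)" using a0 by simp
  also have "\<dots> \<le> -1"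
  proof -
    have "1 \<le> 4 * N\<^sup>2 * Q" using Q N0 by (simp add: field_simps)
    then show ?thesis by simp
  qed
  finally show ?thesis using A by linarith
qed


lemma sum_rest: "p \<in> prob_vectors \<Longrightarrow> sum p (UNIV - {s}) = 1 - p (s::'a::finite)"
  using sum.remove[of UNIV s p] by (simp add: prob_vectors_def)

lemma upd_other:
  fixes p :: "'a::finite \<Rightarrow> real"
  assumes "b \<noteq> s" and "p b \<noteq> 0"
  shows "samba_update \<alpha> p s a R b =
    (if R \<and> a = b then p b * (1 + \<alpha>) else if R \<and> a = s then p b - \<alpha> * (p b)\<^sup>2 / p s else p b)"
  using assms by (auto simp: samba_update_def Let_def power2_eq_square field_simps)

lemma upd_other0:
  fixes p :: "'a::finite \<Rightarrow> real"
  assumes "b \<noteq> s" and "p b = 0"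
  shows "samba_update \<alpha> p s a R b = 0"
  using assms by (auto simp: samba_update_def Let_def)

lemma upd_leader:
  fixes p :: "'a::finite \<Rightarrow> real"
  assumes pv: "p \<in> prob_vectors"
  shows "samba_update \<alpha> p s a R s =
    (if R \<and> a = s then p s + \<alpha> * (\<Sum>c\<in>UNIV - {s}. (p c)\<^sup>2) / p s
     else if R then p s - \<alpha> * p a else p s)"
proof -
  let ?U = "UNIV - {s}"
  let ?upd = "\<lambda>c. p c + \<alpha> * (p c)\<^sup>2 * ((if c = a \<and> R then 1 / p c else 0) - (if s = a \<and> R then 1 / p s else 0))"
  have q: "samba_update \<alpha> p s a R s = 1 - (\<Sum>c\<in>?U. ?upd c)"
    by (simp add: samba_update_def Let_def)
  have rest: "sum p ?U = 1 - p s" by (rule sum_rest[OF pv])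
  show ?thesis
  proof (cases R)
    case R: True
    show ?thesis
    proof (cases "a = s")
      case True
      have "(\<Sum>c\<in>?U. ?upd c) = (\<Sum>c\<in>?U. p c - \<alpha> * (p c)\<^sup>2 / p s)"
        using True R by (intro sum.cong) auto
      also have "\<dots> = sum p ?U - \<alpha> * (\<Sum>c\<in>?U. (p c)\<^sup>2) / p s"
        by (simp add: sum_subtractf sum_distrib_left sum_divide_distrib)
      finally show ?thesis using q rest True R by simp
    next
      case False
      have "(\<Sum>c\<in>?U. ?upd c) = (\<Sum>c\<in>?U. p c + (if c = a then \<alpha> * p a else 0))"
        using False R by (intro sum.cong) (auto simp: power2_eq_square)
      also have "\<dots> = sum p ?U + \<alpha> * p a"
        using False by (simp add: sum.distrib)
      finally show ?thesis using q rest False R by simp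
    qed
  next
    case False
    have "(\<Sum>c\<in>?U. ?upd c) = sum p ?U"
      using False by (intro sum.cong) auto
    then show ?thesis using q rest False by simp
  qed
qed


lemma shrink_pos:
  fixes x y \<alpha> :: real
  assumes "0 < x" "x \<le> y" "0 < \<alpha>" "\<alpha> < 1"
  shows "0 < x - \<alpha> * x\<^sup>2 / y"
proof -
  have y: "0 < y" using assms by linarith
  have "x / y \<le> 1" using assms y by simp
  then have "\<alpha> * (x / y) \<le> \<alpha> * 1" using assms by (intro mult_left_mono) auto
  then have "0 < 1 - \<alpha> * (x / y)" using assms by linarith
  then have "0 < x * (1 - \<alpha> * (x / y))" using assms by simp
  also have "x * (1 - \<alpha> * (x / y)) = x - \<alpha> * x\<^sup>2 / y" by (simp add: field_simps power2_eq_square)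
  finally show ?thesis .
qed

lemma shrink_nonneg:
  fixes x y \<alpha> :: real
  assumes "0 \<le> x" "x \<le> y" "0 < \<alpha>" "\<alpha> < 1"
  shows "0 \<le> x - \<alpha> * x\<^sup>2 / y"
  using shrink_pos[of x y \<alpha>] assms by (cases "x = 0") auto

lemma argmax_ge: "s \<in> argmax_arms p \<Longrightarrow> p b \<le> p s"
  by (simp add: argmax_arms_def)

lemma argmax_N:
  fixes p :: "'a::finite \<Rightarrow> real"
  assumes "p \<in> prob_vectors" "s \<in> argmax_arms p"
  shows "1 / real CARD('a) \<le> p s"
proof -
  have "1 = sum p UNIV" using assms by (simp add: prob_vectors_def)
  also have "\<dots> \<le> sum (\<lambda>_. p s) (UNIV :: 'a set)" using assms by (intro sum_mono) (simp add: argmax_ge)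
  also have "\<dots> = real CARD('a) * p s" by simp
  finally show ?thesis by (simp add: field_simps)
qed

lemma step_inv:
  fixes p :: "'a::finite \<Rightarrow> real"
  assumes pv: "p \<in> prob_vectors" and a0: "0 < \<alpha>" and a1: "\<alpha> < 1"
    and s: "s \<in> argmax_arms p" and x0: "0 < p astar"
  shows "samba_update \<alpha> p s a R \<in> prob_vectors \<and> 0 < samba_update \<alpha> p s a R astar"
proof -
  let ?q = "samba_update \<alpha> p s a R"
  have ps: "0 < p s" using argmax_ge[OF s, of astar] x0 by linarith
  have pnn: "\<And>b. 0 \<le> p b" using pv by (simp add: prob_vectors_def)
  have sum1: "sum ?q UNIV = 1"
  proof -
    have "sum ?q UNIV = ?q s + sum ?q (UNIV - {s})" by (rule sum.remove) auto
    also have "sum ?q (UNIV - {s}) = (\<Sum>c\<in>UNIV - {s}. p c + \<alpha> * (p c)\<^sup>2 *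
                  ((if c = a \<and> R then 1 / p c else 0) - (if s = a \<and> R then 1 / p s else 0)))"
      by (intro sum.cong) (auto simp: samba_update_def Let_def)
    finally show ?thesis by (simp add: samba_update_def Let_def)
  qed
  have Q0: "0 \<le> (\<Sum>c\<in>UNIV - {s}. (p c)\<^sup>2)" by (simp add: sum_nonneg)
  have lead: "0 < ?q s"
  proof -
    have "0 < p s - \<alpha> * p a"
    proof -
      have "\<alpha> * p a \<le> \<alpha> * p s" using argmax_ge[OF s, of a] a0 by simp
      moreover have "\<alpha> * p s < p s" using a1 ps by simp
      ultimately show ?thesis by linarith
    qed
    moreover have "0 < p s + \<alpha> * (\<Sum>c\<in>UNIV - {s}. (p c)\<^sup>2) / p s" using Q0 ps a0 by (simp add: add_pos_nonneg)
    ultimately show ?thesis using ps by (simp add: upd_leader[OF pv])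
  qed
  have other: "0 \<le> ?q b \<and> (0 < p b \<longrightarrow> 0 < ?q b)" if "b \<noteq> s" for b
  proof (cases "p b = 0")
    case True
    then show ?thesis using upd_other0[of b s p \<alpha> a R] that by simp
  next
    case False
    then have pb: "0 < p b" using pnn[of b] by simp
    have "0 < p b - \<alpha> * (p b)\<^sup>2 / p s" using shrink_pos[OF pb argmax_ge[OF s] a0 a1] .
    then show ?thesis using pb a0 upd_other[of b s p \<alpha> a R] that False by simp
  qed
  have nn: "\<forall>b. 0 \<le> ?q b" using other lead by (metis less_le)
  have "0 < ?q astar"
    using lead other[of astar] x0 by (cases "astar = s") auto
  then show ?thesis using nn sum1 by (simp add: prob_vectors_def)
qed

lemma step_inv_pmf:
  fixes p :: "'a::finite \<Rightarrow> real"
  assumes pv: "p \<in> prob_vectors" and a0: "0 < \<alpha>" and a1: "\<alpha> < 1" and x0: "0 < p astar"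
    and q: "q \<in> set_pmf (samba_step \<alpha> r p)"
  shows "q \<in> prob_vectors \<and> 0 < q astar"
proof -
  from q obtain s a R where "s \<in> argmax_arms p" "q = samba_update \<alpha> p s a R"
    by (auto simp: samba_step_def argmax_ne)
  then show ?thesis using step_inv[OF pv a0 a1 _ x0] by simp
qed


lemma Q_lower:
  fixes p :: "'a::finite \<Rightarrow> real"
  assumes pv: "p \<in> prob_vectors" and ps: "p s \<le> 1/2" and card2: "2 \<le> CARD('a)"
  shows "1 / (4 * (real CARD('a))\<^sup>2) \<le> (\<Sum>c\<in>UNIV - {s}. (p c)\<^sup>2)"
proof -
  let ?N = "real CARD('a)"
  let ?U = "UNIV - {s} :: 'a set"
  have N0: "0 < ?N" by simp
  have cardU: "card ?U = CARD('a) - 1" by (simp add: card_Diff_subset)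
  have "1 \<le> card ?U" using cardU card2 by simp
  then have Une: "?U \<noteq> {}" by (metis card.empty not_one_le_zero)
  have "\<exists>c\<in>?U. 1 / (2 * ?N) \<le> p c"
  proof (rule ccontr)
    assume "\<not> ?thesis"
    then have lt: "\<And>c. c \<in> ?U \<Longrightarrow> p c < 1 / (2 * ?N)" by force
    have "sum p ?U < sum (\<lambda>_. 1 / (2 * ?N)) ?U"
      by (rule sum_strict_mono[OF _ Une lt]) simp
    also have "\<dots> = real (CARD('a) - 1) / (2 * ?N)" by (simp add: cardU)
    also have "\<dots> \<le> 1/2"
    proof -
      have "real (CARD('a) - 1) \<le> ?N" by simp
      then show ?thesis using N0 by (simp add: field_simps)
    qed
    finally show False using sum_rest[OF pv, of s] ps by linarith
  qed
  then obtain c where c: "c \<in> ?U" "1 / (2 * ?N) \<le> p c" by blast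
  have "(1 / (2 * ?N))\<^sup>2 \<le> (p c)\<^sup>2" using c N0 by (intro power_mono) auto
  also have "\<dots> \<le> (\<Sum>c\<in>?U. (p c)\<^sup>2)" by (rule member_le_sum[OF c(1)]) auto
  finally show ?thesis by (simp add: power2_eq_square field_simps)
qed

definition Vf :: "real \<Rightarrow> real \<Rightarrow> 'a \<Rightarrow> ('a \<Rightarrow> real) \<Rightarrow> real" where
  "Vf K L astar q = K / q astar + L * (1 - q astar)"


lemma drift_leader:
  fixes p :: "'a::finite \<Rightarrow> real" and r :: "'a \<Rightarrow> real"
  assumes pv: "p \<in> prob_vectors" and x0: "0 < p astar" and xh: "p astar \<le> 1/2"
    and s: "s \<in> argmax_arms p" and a0: "0 < \<alpha>" and a1: "\<alpha> < 1"
    and rr: "\<And>a. 0 \<le> r a \<and> r a \<le> 1" and rho: "\<And>a. a \<noteq> astar \<Longrightarrow> r a \<le> \<rho>"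
    and rho0: "0 \<le> \<rho>" and rhoD: "\<rho> = r astar - \<Delta>" and D0: "0 < \<Delta>"
    and eta: "r astar / (1 + \<alpha>) = \<rho> + \<eta>" and eta0: "0 < \<eta>" and card2: "2 \<le> CARD('a)"
    and K: "K = 2 / (\<alpha> * \<eta>)"
    and L1: "(K * \<alpha> / (1 - \<alpha>) + 1) / (\<alpha> * \<Delta> * (\<eta> / (4 * real CARD('a)))\<^sup>2) \<le> L"
    and L2: "(K * (real CARD('a))\<^sup>2 / (1 - \<alpha>) + 4 * (real CARD('a))\<^sup>2 / \<alpha>) / \<Delta> \<le> L"
  shows "(\<Sum>a\<in>UNIV. p a * (Vf K L astar (samba_update \<alpha> p s a True) * r a
        + Vf K L astar (samba_update \<alpha> p s a False) * (1 - r a))) \<le> Vf K L astar p - 1"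
proof -
  define N where "N = real CARD('a)"
  have N0: "0 < N" by (simp add: N_def)
  define x where "x = p astar"
  define h where "h = (\<lambda>z. K / z + L * (1 - z))"
  have Vh: "\<And>q. Vf K L astar q = h (q astar)" by (simp add: Vf_def h_def)
  have K0: "0 < K" using K a0 eta0 by simp
  have L0: "0 \<le> L"
    by (rule order_trans[OF _ L2]) (use K0 a0 a1 D0 in simp)
  have pnn: "\<And>b. 0 \<le> p b" using pv by (simp add: prob_vectors_def)
  have rho1: "\<rho> \<le> 1" using rhoD rr[of astar] D0 by linarith
  define \<phi> where "\<phi> = (\<lambda>a. samba_update \<alpha> p s a True astar)"
  have F: "\<And>a. samba_update \<alpha> p s a False astar = x"
  proof -
    fix a show "samba_update \<alpha> p s a False astar = x"
      using upd_other[of astar s p \<alpha> a False] upd_leader[OF pv, of \<alpha> s a False] x0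
      by (cases "astar = s") (auto simp: x_def)
  qed
  have "(\<Sum>a\<in>UNIV. p a * (Vf K L astar (samba_update \<alpha> p s a True) * r a
        + Vf K L astar (samba_update \<alpha> p s a False) * (1 - r a)))
      = (\<Sum>a\<in>UNIV. p a * h x + p a * r a * (h (\<phi> a) - h x))"
    by (intro sum.cong refl) (simp add: Vh F \<phi>_def algebra_simps)
  also have "\<dots> = h x + (\<Sum>a\<in>UNIV. p a * r a * (h (\<phi> a) - h x))"
    using pv by (simp add: sum.distrib sum_distrib_right[symmetric] prob_vectors_def)
  finally have S1: "(\<Sum>a\<in>UNIV. p a * (Vf K L astar (samba_update \<alpha> p s a True) * r a
        + Vf K L astar (samba_update \<alpha> p s a False) * (1 - r a)))
      = h x + (\<Sum>a\<in>UNIV. p a * r a * (h (\<phi> a) - h x))" .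
  have Vp: "Vf K L astar p = h x" by (simp add: Vh x_def)
  have "(\<Sum>a\<in>UNIV. p a * r a * (h (\<phi> a) - h x)) \<le> -1"
  proof (cases "s = astar")
    case False
    define y where "y = p s"
    have xy: "x \<le> y" using argmax_ge[OF s] by (simp add: x_def y_def)
    have yN: "1 / N \<le> y" using argmax_N[OF pv s] by (simp add: N_def y_def)
    have phi: "\<And>a. \<phi> a = (if a = astar then x * (1 + \<alpha>) else if a = s then x - \<alpha> * x\<^sup>2 / y else x)"
      using upd_other[of astar s p \<alpha> _ True] False x0 by (auto simp: \<phi>_def x_def y_def)
    have "(\<Sum>a\<in>UNIV. p a * r a * (h (\<phi> a) - h x)) =
       (\<Sum>a\<in>UNIV. (if a = astar then x * r astar * (h (x * (1 + \<alpha>)) - h x) else 0)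
              + (if a = s then y * r s * (h (x - \<alpha> * x\<^sup>2 / y) - h x) else 0))"
      by (intro sum.cong refl) (use False in \<open>auto simp: phi x_def y_def\<close>)
    also have "\<dots> = x * r astar * (h (x * (1 + \<alpha>)) - h x) + y * r s * (h (x - \<alpha> * x\<^sup>2 / y) - h x)"
      by (simp add: sum.distrib)
    also have "\<dots> \<le> -1"
      unfolding h_def
    proof (rule caseA_arith[OF a0 a1 _ xy yN N0, where \<rho>=\<rho> and \<eta>=\<eta> and \<Delta>=\<Delta>])
      show "0 < x" using x0 by (simp add: x_def)
      show "0 \<le> r s" using rr by simp
      show "r s \<le> \<rho>" using rho False by metis
      show "r astar \<le> 1" using rr by simp
      show "\<Delta> \<le> r astar - r s" using rho[of s] False rhoD by simp
      show "r astar / (1 + \<alpha>) = \<rho> + \<eta>" by (rule eta)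
      show "0 < \<eta>" "0 < \<Delta>" "\<rho> \<le> 1" "K = 2 / (\<alpha> * \<eta>)" by (fact eta0 D0 rho1 K)+
      show "(K * \<alpha> / (1 - \<alpha>) + 1) / (\<alpha> * \<Delta> * (\<eta> / (4 * N))\<^sup>2) \<le> L" using L1 by (simp add: N_def)
    qed
    finally show ?thesis .
  next
    case True
    let ?U = "UNIV - {astar} :: 'a set"
    define Q where "Q = (\<Sum>c\<in>?U. (p c)\<^sup>2)"
    have phi: "\<And>a. \<phi> a = (if a = astar then x + \<alpha> * Q / x else x - \<alpha> * p a)"
      using upd_leader[OF pv, of \<alpha> s _ True] True by (auto simp: \<phi>_def x_def Q_def)
    have Q0: "0 \<le> Q" by (simp add: Q_def sum_nonneg)
    have xN: "1 / N \<le> x" using argmax_N[OF pv s] True by (simp add: N_def x_def)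
    define C where "C = K * \<alpha> * N\<^sup>2 / (1 - \<alpha>) + L * \<alpha>"
    have "(\<Sum>a\<in>UNIV. p a * r a * (h (\<phi> a) - h x)) =
        p astar * r astar * (h (\<phi> astar) - h x) + (\<Sum>a\<in>?U. p a * r a * (h (\<phi> a) - h x))"
      by (rule sum.remove) auto
    also have "p astar * r astar * (h (\<phi> astar) - h x) \<le> - L * \<alpha> * r astar * Q"
      unfolding phi h_def x_def[symmetric] using caseB_top[where x=x and rst="r astar" and K=K and L=L and Q=Q and \<alpha>=\<alpha>] a0 Q0 x0 K0 rr
      by (simp add: x_def)
    also have "(\<Sum>a\<in>?U. p a * r a * (h (\<phi> a) - h x)) \<le> (\<Sum>a\<in>?U. r a * (p a)\<^sup>2 * C)"
    proof (rule sum_mono)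
      fix a assume "a \<in> ?U"
      then have na: "a \<noteq> astar" by simp
      have pax: "p a \<le> x" using argmax_ge[OF s] True by (simp add: x_def)
      show "p a * r a * (h (\<phi> a) - h x) \<le> r a * (p a)\<^sup>2 * C"
        unfolding phi h_def C_def using na
        caseB_term[OF a0 a1 _ pnn[of a] pax xN N0 _ K0[THEN less_imp_le] L0, of "r a"] x0 rr
        by (simp add: x_def)
    qed
    also have "(\<Sum>a\<in>?U. r a * (p a)\<^sup>2 * C) = (\<Sum>a\<in>?U. r a * (p a)\<^sup>2) * C"
      by (simp add: sum_distrib_right)
    finally have A: "(\<Sum>a\<in>UNIV. p a * r a * (h (\<phi> a) - h x)) \<le>
        - L * \<alpha> * r astar * Q + (\<Sum>a\<in>?U. r a * (p a)\<^sup>2) * C" by simp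
    have Sle: "(\<Sum>a\<in>?U. r a * (p a)\<^sup>2) \<le> \<rho> * Q"
    proof -
      have "(\<Sum>a\<in>?U. r a * (p a)\<^sup>2) \<le> (\<Sum>a\<in>?U. \<rho> * (p a)\<^sup>2)"
        by (rule sum_mono) (use rho in \<open>auto intro: mult_right_mono\<close>)
      then show ?thesis by (simp add: Q_def sum_distrib_left)
    qed
    have Ql: "1 / (4 * N\<^sup>2) \<le> Q"
      using Q_lower[OF pv _ card2, of astar] xh by (simp add: Q_def N_def x_def)
    have "- L * \<alpha> * r astar * Q + (\<Sum>a\<in>?U. r a * (p a)\<^sup>2) * C \<le> -1"
      unfolding C_def
      by (rule caseB_final[OF a0 a1 Sle Ql N0 rhoD rho0 rho1 D0 K0[THEN less_imp_le]])
         (use L2 in \<open>simp add: N_def\<close>)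
    then show ?thesis using A by linarith
  qed
  then show ?thesis unfolding S1 Vp by linarith
qed


lemma drift_step:
  fixes p :: "'a::finite \<Rightarrow> real" and r :: "'a \<Rightarrow> real"
  assumes pv: "p \<in> prob_vectors" and x0: "0 < p astar" and xh: "p astar \<le> 1/2"
    and a0: "0 < \<alpha>" and a1: "\<alpha> < 1"
    and rr: "\<And>a. 0 \<le> r a \<and> r a \<le> 1" and rho: "\<And>a. a \<noteq> astar \<Longrightarrow> r a \<le> \<rho>"
    and rho0: "0 \<le> \<rho>" and rhoD: "\<rho> = r astar - \<Delta>" and D0: "0 < \<Delta>"
    and eta: "r astar / (1 + \<alpha>) = \<rho> + \<eta>" and eta0: "0 < \<eta>" and card2: "2 \<le> CARD('a)"
    and K: "K = 2 / (\<alpha> * \<eta>)"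
    and L1: "(K * \<alpha> / (1 - \<alpha>) + 1) / (\<alpha> * \<Delta> * (\<eta> / (4 * real CARD('a)))\<^sup>2) \<le> L"
    and L2: "(K * (real CARD('a))\<^sup>2 / (1 - \<alpha>) + 4 * (real CARD('a))\<^sup>2 / \<alpha>) / \<Delta> \<le> L"
  shows "measure_pmf.expectation (samba_step \<alpha> r p) (Vf K L astar) \<le> Vf K L astar p - 1"
proof -
  let ?S = "argmax_arms p"
  have cS: "0 < card ?S" using argmax_ne[of p] by (simp add: card_gt_0_iff)
  have "measure_pmf.expectation (samba_step \<alpha> r p) (Vf K L astar) =
    (\<Sum>s\<in>?S. (\<Sum>a\<in>UNIV. p a * (Vf K L astar (samba_update \<alpha> p s a True) * r a
        + Vf K L astar (samba_update \<alpha> p s a False) * (1 - r a))) / card ?S)"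
    by (rule step_expect[OF pv rr])
  also have "\<dots> \<le> (\<Sum>s\<in>?S. (Vf K L astar p - 1) / card ?S)"
  proof (intro sum_mono divide_right_mono)
    fix s assume s: "s \<in> ?S"
    show "(\<Sum>a\<in>UNIV. p a * (Vf K L astar (samba_update \<alpha> p s a True) * r a
        + Vf K L astar (samba_update \<alpha> p s a False) * (1 - r a))) \<le> Vf K L astar p - 1"
      by (rule drift_leader[where \<rho>=\<rho> and \<Delta>=\<Delta> and \<eta>=\<eta>],
          (fact pv x0 xh s a0 a1 rr rho rho0 rhoD D0 eta eta0 card2 K L1 L2)+)
  qed simp
  also have "\<dots> = Vf K L astar p - 1" using cS argmax_ne[of p] by simp
  finally show ?thesis .
qed

lemma Vf_nonneg:
  fixes q :: "'a::finite \<Rightarrow> real"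
  assumes "q \<in> prob_vectors" "0 < q astar" "0 \<le> K" "0 \<le> L"
  shows "0 \<le> Vf K L astar q"
proof -
  have "q astar \<le> sum q UNIV" by (rule member_le_sum) (use assms in \<open>auto simp: prob_vectors_def\<close>)
  then have "q astar \<le> 1" using assms by (simp add: prob_vectors_def)
  then show ?thesis using assms by (simp add: Vf_def)
qed

lemma T_bound:
  fixes p :: "'a::finite \<Rightarrow> real" and r :: "'a \<Rightarrow> real"
  assumes a0: "0 < \<alpha>" and a1: "\<alpha> < 1"
    and rr: "\<And>a. 0 \<le> r a \<and> r a \<le> 1" and rho: "\<And>a. a \<noteq> astar \<Longrightarrow> r a \<le> \<rho>"
    and rho0: "0 \<le> \<rho>" and rhoD: "\<rho> = r astar - \<Delta>" and D0: "0 < \<Delta>"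
    and eta: "r astar / (1 + \<alpha>) = \<rho> + \<eta>" and eta0: "0 < \<eta>" and card2: "2 \<le> CARD('a)"
    and K: "K = 2 / (\<alpha> * \<eta>)"
    and L1: "(K * \<alpha> / (1 - \<alpha>) + 1) / (\<alpha> * \<Delta> * (\<eta> / (4 * real CARD('a)))\<^sup>2) \<le> L"
    and L2: "(K * (real CARD('a))\<^sup>2 / (1 - \<alpha>) + 4 * (real CARD('a))\<^sup>2 / \<alpha>) / \<Delta> \<le> L"
  shows "p \<in> prob_vectors \<Longrightarrow> 0 < p astar \<Longrightarrow> p astar \<le> 1/2 \<Longrightarrow> Tt \<alpha> r astar p n \<le> Vf K L astar p"
proof (induction n arbitrary: p)
  have K0: "0 < K" using K a0 eta0 by simp
  have L0: "0 \<le> L"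
    by (rule order_trans[OF _ L2]) (use K0 a0 a1 D0 in simp)
  {
    case 0
    then show ?case using Vf_nonneg[of p astar K L] K0 L0 by (simp add: Tt_def)
  next
    case (Suc n)
    let ?E = "measure_pmf.expectation (samba_step \<alpha> r p)"
    have "Tt \<alpha> r astar p (Suc n) = 1 + ?E (\<lambda>q. if q astar \<le> 1/2 then Tt \<alpha> r astar q n else 0)"
      by (rule T_rec)
    also have "?E (\<lambda>q. if q astar \<le> 1/2 then Tt \<alpha> r astar q n else 0) \<le> ?E (Vf K L astar)"
    proof (rule integral_mono_AE)
      show "AE q in measure_pmf (samba_step \<alpha> r p).
           (if q astar \<le> 1/2 then Tt \<alpha> r astar q n else 0) \<le> Vf K L astar q"
      proof (rule AE_pmfI)
        fix q assume q: "q \<in> set_pmf (samba_step \<alpha> r p)"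
        have qi: "q \<in> prob_vectors" "0 < q astar" using step_inv_pmf[OF Suc.prems(1) a0 a1 Suc.prems(2) q] by auto
        show "(if q astar \<le> 1/2 then Tt \<alpha> r astar q n else 0) \<le> Vf K L astar q"
          using Suc.IH[OF qi] Vf_nonneg[OF qi K0[THEN less_imp_le] L0] by auto
      qed
    qed simp_all
    also have "?E (Vf K L astar) \<le> Vf K L astar p - 1"
      by (rule drift_step[where \<rho>=\<rho> and \<Delta>=\<Delta> and \<eta>=\<eta>],
          (fact Suc.prems a0 a1 rr rho rho0 rhoD D0 eta eta0 card2 K L1 L2)+)
    finally show ?case by linarith
  }
qed


lemma expected_bound:
  fixes p :: "'a::finite \<Rightarrow> real"
  assumes T: "\<And>n. Tt \<alpha> r astar p n \<le> B"
  shows "expected_tau2 \<alpha> r astar p \<le> ennreal B"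
proof -
  let ?e = "\<lambda>k. tau2_eq_prob \<alpha> r astar p k"
  let ?g = "\<lambda>k. tau2_gt_prob \<alpha> r astar p k"
  have e0: "\<And>k. 0 \<le> ?e k" by (simp add: tau2_eq_prob_def)
  have g0: "\<And>k. 0 \<le> ?g k" by (simp add: tau2_gt_prob_def)
  have sum_le: "(\<Sum>k\<le>n. real k * ?e k) \<le> B" for n
  proof -
    have "(\<Sum>k\<le>n. real k * ?e k) \<le> Tt \<alpha> r astar p n" unfolding Tt_def using g0[of n] by simp
    then show ?thesis using T[of n] by linarith
  qed
  have S: "(\<Sum>n. ennreal (real n) * ennreal (?e n)) \<le> ennreal B"
  proof (rule suminf_le_const)
    show "summable (\<lambda>n. ennreal (real n) * ennreal (?e n))" by (rule summableI)
    fix n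
    have "(\<Sum>k<n. ennreal (real k) * ennreal (?e k)) = ennreal (\<Sum>k<n. real k * ?e k)"
      using e0 by (simp add: ennreal_mult'[symmetric])
    also have "(\<Sum>k<n. real k * ?e k) \<le> (\<Sum>k\<le>n. real k * ?e k)"
      by (rule sum_mono2) (use e0 in auto)
    also have "\<dots> \<le> B" by (rule sum_le)
    finally show "(\<Sum>k<n. ennreal (real k) * ennreal (?e k)) \<le> ennreal B"
      by (simp add: ennreal_leI)
  qed
  have I: "(INF n. ennreal (?g n)) = 0"
  proof -
    have "(INF n. ennreal (?g n)) \<le> 0"
    proof (rule ennreal_le_epsilon)
      fix \<epsilon> :: real assume \<epsilon>: "0 < \<epsilon>"
      define n where "n = nat \<lceil>B / \<epsilon>\<rceil> + 1"
      have n1: "1 \<le> n" by (simp add: n_def)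
      have nB: "B / \<epsilon> \<le> real n" unfolding n_def by linarith
      have "real n * ?g n \<le> Tt \<alpha> r astar p n" unfolding Tt_def
        by (simp add: sum_nonneg e0)
      then have "real n * ?g n \<le> B" using T[of n] by linarith
      then have "?g n \<le> B / real n" using n1 by (simp add: field_simps)
      also have "B / real n \<le> \<epsilon>"
        using nB n1 \<epsilon> by (simp add: field_simps)
      finally have "?g n \<le> \<epsilon>" .
      then have "(INF n. ennreal (?g n)) \<le> ennreal \<epsilon>"
        by (meson INF_lower2 UNIV_I ennreal_leI)
      then show "(INF n. ennreal (?g n)) \<le> 0 + ennreal \<epsilon>" by simp
    qed
    then show ?thesis by simp
  qed
  show ?thesis unfolding expected_tau2_def I using S by simp
qed

theorem corollary7:
  fixes r :: "'a::finite \<Rightarrow> real" and astar :: 'a and \<alpha> :: real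
  assumes arms: "CARD('a) \<ge> 2"
    and r_range: "\<And>a. 0 \<le> r a \<and> r a \<le> 1"
    and opt: "\<And>a. a \<noteq> astar \<Longrightarrow> r a < r astar"
    and alpha: "0 < \<alpha>" "\<alpha> < 1"
    and alpha_gap: "\<alpha> * (r astar - gap r astar) < gap r astar"
  shows "(SUP p\<in>{p\<in>prob_vectors. (1 - \<alpha>) / 2 \<le> p astar \<and> p astar < 1/2}.
            expected_tau2 \<alpha> r astar p) < \<top>"
proof -
  define \<Delta> where "\<Delta> = gap r astar"
  define \<rho> where "\<rho> = Max (r ` (UNIV - {astar}))"
  have rhoD: "\<rho> = r astar - \<Delta>" by (simp add: \<Delta>_def gap_def \<rho>_def)
  have "1 \<le> card (UNIV - {astar})" using arms by (simp add: card_Diff_subset)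
  then have Une: "UNIV - {astar} \<noteq> {}" by (metis card.empty not_one_le_zero)
  have rho: "\<And>a. a \<noteq> astar \<Longrightarrow> r a \<le> \<rho>" unfolding \<rho>_def by (intro Max_ge) auto
  have "\<rho> \<in> r ` (UNIV - {astar})" unfolding \<rho>_def by (rule Max_in) (use Une in auto)
  then obtain b where b: "b \<noteq> astar" "\<rho> = r b" by auto
  have D0: "0 < \<Delta>" using opt[OF b(1)] b(2) rhoD by linarith
  have rho0: "0 \<le> \<rho>" using b(2) r_range by simp
  define \<eta> where "\<eta> = r astar / (1 + \<alpha>) - \<rho>"
  have eta: "r astar / (1 + \<alpha>) = \<rho> + \<eta>" by (simp add: \<eta>_def)
  have eta0: "0 < \<eta>"
  proof -
    have "\<alpha> * \<rho> < r astar - \<rho>" using alpha_gap rhoD by (simp add: \<Delta>_def)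
    then have "\<rho> * (1 + \<alpha>) < r astar" by (simp add: algebra_simps)
    then have "\<rho> < r astar / (1 + \<alpha>)" using alpha by (simp add: field_simps)
    then show ?thesis by (simp add: \<eta>_def)
  qed
  define K where "K = 2 / (\<alpha> * \<eta>)"
  have K0: "0 < K" using alpha eta0 by (simp add: K_def)
  define L1 where "L1 = (K * \<alpha> / (1 - \<alpha>) + 1) / (\<alpha> * \<Delta> * (\<eta> / (4 * real CARD('a)))\<^sup>2)"
  define L2 where "L2 = (K * (real CARD('a))\<^sup>2 / (1 - \<alpha>) + 4 * (real CARD('a))\<^sup>2 / \<alpha>) / \<Delta>"
  have L10: "0 \<le> L1" using K0 alpha D0 by (simp add: L1_def)
  have L20: "0 \<le> L2" using K0 alpha D0 by (simp add: L2_def)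
  define L where "L = L1 + L2"
  have L1: "L1 \<le> L" and L2: "L2 \<le> L" using L10 L20 by (simp_all add: L_def)
  define B where "B = 2 * K / (1 - \<alpha>) + L"
  have bound: "expected_tau2 \<alpha> r astar p \<le> ennreal B"
    if p: "p \<in> {p\<in>prob_vectors. (1 - \<alpha>) / 2 \<le> p astar \<and> p astar < 1/2}" for p
  proof (rule expected_bound)
    fix n
    have pv: "p \<in> prob_vectors" and xl: "(1 - \<alpha>) / 2 \<le> p astar" and xh: "p astar < 1/2" using p by auto
    have "0 < (1 - \<alpha>) / 2" using alpha by simp
    then have x0: "0 < p astar" using xl by linarith
    have Kd: "K = 2 / (\<alpha> * \<eta>)" by (simp add: K_def)
    have L1': "(K * \<alpha> / (1 - \<alpha>) + 1) / (\<alpha> * \<Delta> * (\<eta> / (4 * real CARD('a)))\<^sup>2) \<le> L"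
      using L1 by (simp add: L1_def)
    have L2': "(K * (real CARD('a))\<^sup>2 / (1 - \<alpha>) + 4 * (real CARD('a))\<^sup>2 / \<alpha>) / \<Delta> \<le> L"
      using L2 by (simp add: L2_def)
    have xh': "p astar \<le> 1/2" using xh by simp
    have "Tt \<alpha> r astar p n \<le> Vf K L astar p"
      using T_bound[where r=r and astar=astar and \<alpha>=\<alpha> and \<rho>=\<rho> and \<Delta>=\<Delta> and \<eta>=\<eta> and K=K and L=L and p=p and n=n,
          OF alpha(1) alpha(2) r_range rho rho0 rhoD D0 eta eta0 arms Kd L1' L2' pv x0 xh'] .
    also have "Vf K L astar p \<le> B"
    proof -
      have "K / p astar \<le> K / ((1 - \<alpha>) / 2)"
        using K0 xl alpha by (intro divide_left_mono) auto
      also have "\<dots> = 2 * K / (1 - \<alpha>)" by simp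
      finally have A: "K / p astar \<le> 2 * K / (1 - \<alpha>)" .
      have "L * (1 - p astar) \<le> L * 1" using L10 L20 x0 by (intro mult_left_mono) (auto simp: L_def)
      then show ?thesis using A by (simp add: Vf_def B_def)
    qed
    finally show "Tt \<alpha> r astar p n \<le> B" .
  qed
  have "(SUP p\<in>{p\<in>prob_vectors. (1 - \<alpha>) / 2 \<le> p astar \<and> p astar < 1/2}.
            expected_tau2 \<alpha> r astar p) \<le> ennreal B"
    by (rule SUP_least) (rule bound)
  also have "\<dots> < \<top>" by simp
  finally show ?thesis .
qed

end
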